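(* Let $q$ and $n$ be nonnegative integers. Then $$\zeta^\star(\{1\}^q,n+2)=\sum_{r=1}^{q+1}\sum_{|\alpha|=q+1}\zeta(\alpha_1,\ldots,\alpha_{r-1},\alpha_r+n+1)=\frac{1}{q!\,n!}\int_{E_2}\left(\log\frac{1}{1-t_2}\right)^q\left(\log\frac{t_2}{t_1}\right)^n\frac{dt_1\,dt_2}{(1-t_1)t_2}.$$
   Context: For positive integers $\alpha_1,\ldots,\alpha_r$ with $\alpha_r\ge2$: $\zeta(\alpha_1,\ldots,\alpha_r)=\sum_{1\le k_1<\cdots<k_r}k_1^{-\alpha_1}\cdots k_r^{-\alpha_r}$ and $\zeta^\star(\alpha_1,\ldots,\alpha_r)=\sum_{1\le k_1\le\cdots\le k_r}k_1^{-\alpha_1}\cdots k_r^{-\alpha_r}$. $\{a\}^k$ denotes $k$ repetitions of $a$. For fixed $r$, $\sum_{|\alpha|=m}$ denotes the sum over all $r$-tuples $(\alpha_1,\ldots,\alpha_r)$ of positive integers with sum $m$. $E_2=\{(t_1,t_2)\in\mathbb{R}^2:0<t_1<t_2<1\}$. *)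

theory Defs
  imports "HOL-Analysis.Analysis"
begin

text \<open>All terms are nonnegative, so the infinite sum is an unconditional sum.\<close>

definition mzv_term :: "nat list \<Rightarrow> nat list \<Rightarrow> real" where
  "mzv_term \<alpha> ks = (\<Prod>i<length \<alpha>. 1 / (real (ks ! i)) ^ (\<alpha> ! i))"

definition mzv :: "nat list \<Rightarrow> real" where
  "mzv \<alpha> = infsum (mzv_term \<alpha>)
     {ks. length ks = length \<alpha> \<and> sorted_wrt (<) ks \<and> (\<forall>k\<in>set ks. 1 \<le> k)}"

definition mzv_star :: "nat list \<Rightarrow> real" where
  "mzv_star \<alpha> = infsum (mzv_term \<alpha>)
     {ks. length ks = length \<alpha> \<and> sorted_wrt (\<le>) ks \<and> (\<forall>k\<in>set ks. 1 \<le> k)}"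

definition compositions :: "nat \<Rightarrow> nat \<Rightarrow> nat list set" where
  "compositions r m = {\<alpha>. length \<alpha> = r \<and> (\<forall>a\<in>set \<alpha>. 1 \<le> a) \<and> sum_list \<alpha> = m}"

definition E2 :: "(real \<times> real) set" where
  "E2 = {(t1, t2). 0 < t1 \<and> t1 < t2 \<and> t2 < 1}"

end

theory Submission
  imports Defs
begin


lemma swap_integrals:
  fixes \<phi> \<psi> :: "real \<Rightarrow> real"
  assumes [measurable]: "\<phi> \<in> borel_measurable borel" "\<psi> \<in> borel_measurable borel"
  shows "(\<integral>\<^sup>+t. ennreal (\<psi> t) * indicator {a<..<b} t * (\<integral>\<^sup>+s. ennreal (\<phi> s) * indicator {a<..<t} s \<partial>lborel) \<partial>lborel)
       = (\<integral>\<^sup>+s. ennreal (\<phi> s) * indicator {a<..<b} s * (\<integral>\<^sup>+t. ennreal (\<psi> t) * indicator {s<..<b} t \<partial>lborel) \<partial>lborel)"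
proof -
  define G where "G = (\<lambda>s t. ennreal (\<phi> s) * ennreal (\<psi> t) * indicator {(s,t). a < s \<and> s < t \<and> t < b} (s,t))"
  have Gm: "case_prod G \<in> borel_measurable (lborel \<Otimes>\<^sub>M lborel)"
  proof -
    have "{(s,t). a < s \<and> s < t \<and> t < b} \<in> sets (lborel \<Otimes>\<^sub>M (lborel::real measure))"
    proof -
      have "{(s,t). a < s \<and> s < t \<and> t < b} = {x\<in>space (lborel \<Otimes>\<^sub>M lborel). a < fst x \<and> fst x < (snd x::real) \<and> snd x < b}" by (auto simp: space_pair_measure)
      also have "\<dots> \<in> sets (lborel \<Otimes>\<^sub>M lborel)" by measurable
      finally show ?thesis .
    qed
    then show ?thesis unfolding G_def by measurable
  qed
  have "(\<integral>\<^sup>+t. ennreal (\<psi> t) * indicator {a<..<b} t * (\<integral>\<^sup>+s. ennreal (\<phi> s) * indicator {a<..<t} s \<partial>lborel) \<partial>lborel)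
     = (\<integral>\<^sup>+t. (\<integral>\<^sup>+s. G s t \<partial>lborel) \<partial>lborel)"
    apply (intro nn_integral_cong)
    apply (subst nn_integral_cmult[symmetric])
     apply measurable
    apply (intro nn_integral_cong)
    apply (auto simp: G_def indicator_def mult_ac)
    done
  also have "\<dots> = (\<integral>\<^sup>+s. (\<integral>\<^sup>+t. G s t \<partial>lborel) \<partial>lborel)"
    by (rule lborel_pair.Fubini'[OF Gm])
  also have "\<dots> = (\<integral>\<^sup>+s. ennreal (\<phi> s) * indicator {a<..<b} s * (\<integral>\<^sup>+t. ennreal (\<psi> t) * indicator {s<..<b} t \<partial>lborel) \<partial>lborel)"
    apply (intro nn_integral_cong)
    apply (subst nn_integral_cmult[symmetric])
     apply measurable
    apply (intro nn_integral_cong)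
    apply (auto simp: G_def indicator_def mult_ac)
    done
  finally show ?thesis .
qed




definition LL :: "real \<Rightarrow> real" where "LL t = - ln (1 - t)"
definition fq :: "nat \<Rightarrow> real \<Rightarrow> real" where "fq q t = LL t ^ q / fact q"

lemma pow_pred_mult: "of_nat m * (x::real) ^ (m - Suc 0) * x = of_nat m * x ^ m"
  by (cases m) auto

lemma open_closed_nn:
  fixes a b :: real
  assumes "a \<le> b"
  shows "(\<integral>\<^sup>+x. f x * indicator {a<..<b} x \<partial>lborel) = (\<integral>\<^sup>+x. f x * indicator {a..b} x \<partial>lborel)"
proof (rule nn_integral_cong_AE)
  have "AE x in lborel. x \<noteq> a" "AE x in lborel. x \<noteq> (b::real)" by (rule AE_lborel_singleton)+
  then show "AE x in lborel. f x * indicator {a<..<b} x = f x * indicator {a..b} x"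
    by eventually_elim (auto simp: indicator_def)
qed

lemma power_int:
  assumes "0 \<le> a" "a \<le> b"
  shows "(\<integral>\<^sup>+t. ennreal (t ^ m) * indicator {a<..<b} t \<partial>lborel) = ennreal ((b ^ Suc m - a ^ Suc m) / Suc m)"
proof -
  have "(\<integral>\<^sup>+t. ennreal (t ^ m) * indicator {a..b} t \<partial>lborel) = ennreal (b ^ Suc m / Suc m - a ^ Suc m / Suc m)"
  proof (intro nn_integral_FTC_Icc)
    fix x :: real
    have "((\<lambda>x. x ^ Suc m / Suc m) has_real_derivative real (Suc m) * (x ^ (Suc m - Suc 0)) / Suc m) (at x)"
      by (intro DERIV_cdivide DERIV_pow)
    then show "((\<lambda>x. x ^ Suc m / Suc m) has_real_derivative x ^ m) (at x)" by simp
  qed (use assms in auto)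
  then show ?thesis using assms by (simp add: open_closed_nn diff_divide_distrib)
qed

lemma LL_deriv: "t < 1 \<Longrightarrow> (LL has_real_derivative 1 / (1 - t)) (at t)"
  unfolding LL_def by (auto intro!: derivative_eq_intros simp: field_simps)

lemma LL_nonneg: "0 \<le> t \<Longrightarrow> t < 1 \<Longrightarrow> 0 \<le> LL t"
  unfolding LL_def by simp

lemma fq_nonneg: "0 \<le> t \<Longrightarrow> t < 1 \<Longrightarrow> 0 \<le> fq q t"
  unfolding fq_def by (simp add: LL_nonneg)

lemma LL_measurable[measurable]: "LL \<in> borel_measurable borel"
  unfolding LL_def by measurable

lemma fq_measurable[measurable]: "fq q \<in> borel_measurable borel"
  unfolding fq_def by measurable

lemma f_FTC:
  assumes "0 \<le> t" "t < 1"
  shows "(\<integral>\<^sup>+s. ennreal (fq q s / (1 - s)) * indicator {0<..<t} s \<partial>lborel) = ennreal (fq (Suc q) t)"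
proof -
  have d: "((fq (Suc q)) has_real_derivative (fq q s / (1 - s))) (at s)" if "s < 1" for s
  proof -
    have eq: "of_nat (Suc q) * ((1 / (1 - s)) * LL s ^ (Suc q - Suc 0)) / fact (Suc q) = fq q s / (1 - s)"
      by (simp add: fq_def)
    have fqeq: "fq (Suc q) = (\<lambda>s. LL s ^ Suc q / fact (Suc q))"
      by (rule ext) (simp only: fq_def)
    have "((\<lambda>s. LL s ^ Suc q / fact (Suc q)) has_real_derivative
           (of_nat (Suc q) * ((1 / (1 - s)) * LL s ^ (Suc q - Suc 0)) / fact (Suc q))) (at s)"
      using that by (intro DERIV_cdivide DERIV_power LL_deriv)
    then have "((\<lambda>s. LL s ^ Suc q / fact (Suc q)) has_real_derivative fq q s / (1 - s)) (at s)"
      unfolding eq .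
    then show ?thesis unfolding fqeq .
  qed
  have "(\<integral>\<^sup>+s. ennreal (fq q s / (1 - s)) * indicator {0..t} s \<partial>lborel) = ennreal (fq (Suc q) t - fq (Suc q) 0)"
    using assms by (intro nn_integral_FTC_Icc) (auto intro!: d fq_nonneg divide_nonneg_nonneg)
  moreover have "fq (Suc q) 0 = 0" by (simp add: fq_def LL_def)
  ultimately show ?thesis using assms by (simp add: open_closed_nn)
qed

lemma ln_FTC:
  assumes "0 < t" "t \<le> a"
  shows "(\<integral>\<^sup>+s. ennreal (Suc n * ln (a / s) ^ n / s) * indicator {t<..<a} s \<partial>lborel) = ennreal (ln (a / t) ^ Suc n)"
proof -
  have d: "((\<lambda>s. - ((ln a - ln s) ^ Suc n)) has_real_derivative (Suc n * (ln a - ln s) ^ n / s)) (at s)" if "0 < s" for s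
  proof -
    have "((\<lambda>s. - ((ln a - ln s) ^ Suc n)) has_real_derivative - (of_nat (Suc n) * ((0 - 1 / s) * (ln a - ln s) ^ (Suc n - Suc 0)))) (at s)"
      using that by (intro DERIV_minus DERIV_power DERIV_diff DERIV_const DERIV_ln_divide)
    then show ?thesis by simp
  qed
  have "(\<integral>\<^sup>+s. ennreal (Suc n * (ln a - ln s) ^ n / s) * indicator {t..a} s \<partial>lborel)
      = ennreal (- ((ln a - ln a) ^ Suc n) - - ((ln a - ln t) ^ Suc n))"
  proof (rule nn_integral_FTC_Icc)
    fix x assume "x \<in> {t..a}"
    then show "((\<lambda>s. - ((ln a - ln s) ^ Suc n)) has_real_derivative (Suc n * (ln a - ln x) ^ n / x)) (at x)"
      using assms by (intro d) auto
  qed (use assms in auto)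
  also have "(\<integral>\<^sup>+s. ennreal (Suc n * (ln a - ln s) ^ n / s) * indicator {t..a} s \<partial>lborel)
      = (\<integral>\<^sup>+s. ennreal (Suc n * ln (a / s) ^ n / s) * indicator {t..a} s \<partial>lborel)"
    using assms by (intro nn_integral_cong) (auto simp: indicator_def ln_div)
  finally show ?thesis using assms by (simp add: open_closed_nn ln_div)
qed




fun hh :: "nat \<Rightarrow> nat \<Rightarrow> real" where
  "hh 0 k = 1"
| "hh (Suc q) k = (\<Sum>j=1..k. hh q j / j)"

declare hh.simps(2)[simp del]

lemma hh_nonneg: "0 \<le> hh q k"
  by (induction q arbitrary: k) (auto simp: hh.simps intro!: sum_nonneg divide_nonneg_nonneg)

lemma hh_1[simp]: "hh q (Suc 0) = 1"
  by (induction q) (auto simp: hh.simps)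

lemma hh_Suc_k: "hh (Suc q) (Suc k) = hh (Suc q) k + hh q (Suc k) / Suc k"
  by (simp add: hh.simps)

lemma tele_aux: "(y::real) > 0 \<Longrightarrow> 1 - a / y + S + a / (y * (y + 1)) = 1 - (a + b/(y+1))/(y+1) + (S + b/(y+1)^2)"
proof -
  assume y: "y > 0"
  have p: "y + y * y \<noteq> 0" "y * (y + 1) \<noteq> 0" "y + 1 \<noteq> 0" using y by (smt (verit) mult_pos_pos)+
  have "a / y - a / (y * (y + 1)) = a / (y + 1)" using y p by (simp add: field_simps)
  moreover have "(a + b/(y+1))/(y+1) = a/(y+1) + b/(y+1)^2" by (simp add: add_divide_distrib power2_eq_square)
  ultimately show ?thesis by (simp add: algebra_simps)
qed
lemma tele0_aux: "(y::real) > 0 \<Longrightarrow> 1 - 1 / y + 1 / (y * (y + 1)) = 1 - 1 / (y + 1)"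
  using tele_aux[of y 1 0 0] by simp

lemma tele0: "(\<Sum>k=1..N. 1 / (real k * (real k + 1))) = 1 - 1 / real (Suc N)"
proof (induction N)
  case (Suc N)
  have "(\<Sum>k=1..Suc N. 1 / (real k * (real k + 1))) = (\<Sum>k=1..N. 1 / (real k * (real k + 1))) + 1 / (real (Suc N) * (real (Suc N) + 1))"
    by (subst sum.cl_ivl_Suc) simp
  also have "\<dots> = 1 - 1 / real (Suc N) + 1 / (real (Suc N) * (real (Suc N) + 1))" using Suc by simp
  also have "\<dots> = 1 - 1 / (real (Suc N) + 1)" by (rule tele0_aux) simp
  finally show ?case by simp
qed simp

lemma tele: "(\<Sum>k=1..N. hh (Suc p) k / (real k * (real k + 1)))
    = 1 - hh (Suc p) (Suc N) / real (Suc N) + (\<Sum>k=1..N. hh p (Suc k) / (real (Suc k))^2)"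
proof (induction N)
  case 0
  then show ?case by simp
next
  case (Suc N)
  let ?a = "hh (Suc p) (Suc N)" and ?b = "hh p (Suc (Suc N))" and ?S = "(\<Sum>k=1..N. hh p (Suc k) / (real (Suc k))^2)"
  have "(\<Sum>k=1..Suc N. hh (Suc p) k / (real k * (real k + 1)))
     = (\<Sum>k=1..N. hh (Suc p) k / (real k * (real k + 1))) + ?a / (real (Suc N) * (real (Suc N) + 1))"
    by (subst sum.cl_ivl_Suc) simp
  also have "\<dots> = 1 - ?a / real (Suc N) + ?S + ?a / (real (Suc N) * (real (Suc N) + 1))"
    using Suc by simp
  also have "\<dots> = 1 - (?a + ?b / (real (Suc N) + 1)) / (real (Suc N) + 1) + (?S + ?b / (real (Suc N) + 1)^2)"
    by (rule tele_aux) simp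
  also have "\<dots> = 1 - hh (Suc p) (Suc (Suc N)) / real (Suc (Suc N)) + (\<Sum>k=1..Suc N. hh p (Suc k) / (real (Suc k))^2)"
  proof -
    have e2: "real (Suc (Suc N)) = real (Suc N) + 1" by simp
    have s: "(\<Sum>k=1..Suc N. hh p (Suc k) / (real (Suc k))^2) = ?S + ?b / (real (Suc N) + 1)^2"
      by (simp del: of_nat_Suc add: e2)
    have e3: "hh (Suc p) (Suc (Suc N)) / real (Suc (Suc N)) = (?a + ?b/(real (Suc N)+1))/(real (Suc N)+1)"
      by (simp only: hh_Suc_k e2)
    show ?thesis by (simp only: s e3)
  qed
  finally show ?case .
qed

fun BB :: "nat \<Rightarrow> real" where
  "BB 0 = 2"
| "BB (Suc q) = 2 * (1 + BB q)"

lemma term_le: "1 \<le> k \<Longrightarrow> hh q k / (real k)^2 \<le> 2 * (hh q k / (real k * (real k + 1)))"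
proof -
  assume k: "1 \<le> k"
  have "hh q k / (real k)^2 = (2 * hh q k) / (2 * (real k)^2)" by simp
  also have "\<dots> \<le> (2 * hh q k) / (real k * (real k + 1))"
    using k hh_nonneg[of q k] by (intro divide_left_mono) (auto simp: power2_eq_square)
  finally show ?thesis by simp
qed

lemma hh_bound: "(\<Sum>k=1..N. hh q k / (real k)^2) \<le> BB q"
proof (induction q arbitrary: N)
  case 0
  let ?q = "0::nat"
  have "(\<Sum>k=1..N. hh ?q k / (real k)^2) \<le> (\<Sum>k=1..N. 2 * (1 / (real k * (real k + 1))))"
    using term_le[of _ 0] by (intro sum_mono) auto
  also have "\<dots> = 2 * (1 - 1 / Suc N)" by (simp only: sum_distrib_left[symmetric] tele0)
  also have "\<dots> \<le> BB ?q" by simp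
  finally show ?case .
next
  case (Suc p)
  let ?q = "Suc p"
  have "(\<Sum>k=1..N. hh ?q k / (real k)^2) \<le> (\<Sum>k=1..N. 2 * (hh ?q k / (real k * (real k + 1))))"
    by (intro sum_mono term_le) auto
  also have "\<dots> = 2 * (1 - hh (Suc p) (Suc N) / Suc N + (\<Sum>k=1..N. hh p (Suc k) / (real (Suc k))^2))"
    by (simp only: sum_distrib_left[symmetric] tele)
  also have "\<dots> \<le> 2 * (1 + (\<Sum>k=1..Suc N. hh p k / (real k)^2))"
  proof -
    have "(\<Sum>k=1..N. hh p (Suc k) / (real (Suc k))^2) = (\<Sum>k=2..Suc N. hh p k / (real k)^2)"
      by (subst sum.shift_bounds_cl_Suc_ivl[symmetric]) (simp add: numeral_2_eq_2)
    also have "\<dots> \<le> (\<Sum>k=1..Suc N. hh p k / (real k)^2)"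
      by (intro sum_mono2) (auto intro!: divide_nonneg_nonneg hh_nonneg)
    finally have "(\<Sum>k=1..N. hh p (Suc k) / (real (Suc k))^2) \<le> (\<Sum>k=1..Suc N. hh p k / (real k)^2)" .
    moreover have "0 \<le> hh (Suc p) (Suc N) / Suc N" by (intro divide_nonneg_nonneg hh_nonneg) auto
    ultimately show ?thesis by simp
  qed
  also have "\<dots> \<le> BB ?q"
    using Suc.IH[of "Suc N"] by simp
  finally show ?case .
qed



lemma cancel_aux: "u \<noteq> 0 \<Longrightarrow> (c / u) * (u * w / d) = c * w / (d::real)"
  by (cases "d = 0") (simp_all add: field_simps)

lemma P_int:
  assumes "0 < a"
  shows "(\<integral>\<^sup>+t. ennreal (t ^ m * ln (a / t) ^ n) * indicator {0<..<a} t \<partial>lborel)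
         = ennreal (fact n * a ^ Suc m / (Suc m) ^ Suc n)"
proof (induction n)
  case 0
  show ?case using power_int[of 0 a m] assms by simp
next
  case (Suc n)
  define \<psi> where "\<psi> = (\<lambda>s::real. Suc n * ln (a / s) ^ n / s)"
  have [measurable]: "\<psi> \<in> borel_measurable borel" unfolding \<psi>_def by measurable
  have "(\<integral>\<^sup>+t. ennreal (t ^ m * ln (a / t) ^ Suc n) * indicator {0<..<a} t \<partial>lborel)
      = (\<integral>\<^sup>+t. ennreal (t ^ m) * indicator {0<..<a} t * (\<integral>\<^sup>+s. ennreal (\<psi> s) * indicator {t<..<a} s \<partial>lborel) \<partial>lborel)"
  proof (intro nn_integral_cong)
    fix t :: real
    show "ennreal (t ^ m * ln (a / t) ^ Suc n) * indicator {0<..<a} t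
        = ennreal (t ^ m) * indicator {0<..<a} t * (\<integral>\<^sup>+s. ennreal (\<psi> s) * indicator {t<..<a} s \<partial>lborel)"
    proof (cases "t \<in> {0<..<a}")
      case True
      then have "(\<integral>\<^sup>+s. ennreal (\<psi> s) * indicator {t<..<a} s \<partial>lborel) = ennreal (ln (a / t) ^ Suc n)"
        unfolding \<psi>_def by (intro ln_FTC) auto
      moreover have "0 \<le> ln (a / t)" using True by auto
      ultimately show ?thesis using True by (simp add: ennreal_mult)
    qed simp
  qed
  also have "\<dots> = (\<integral>\<^sup>+u. ennreal (\<psi> u) * indicator {0<..<a} u * (\<integral>\<^sup>+v. ennreal (v ^ m) * indicator {0<..<u} v \<partial>lborel) \<partial>lborel)"
    by (rule swap_integrals[symmetric]) auto
  also have "\<dots> = (\<integral>\<^sup>+u. ennreal (Suc n / Suc m) * (ennreal (u ^ m * ln (a / u) ^ n) * indicator {0<..<a} u) \<partial>lborel)"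
  proof (intro nn_integral_cong)
    fix u :: real
    show "ennreal (\<psi> u) * indicator {0<..<a} u * (\<integral>\<^sup>+v. ennreal (v ^ m) * indicator {0<..<u} v \<partial>lborel)
        = ennreal (Suc n / Suc m) * (ennreal (u ^ m * ln (a / u) ^ n) * indicator {0<..<a} u)"
    proof (cases "u \<in> {0<..<a}")
      case True
      then have "(\<integral>\<^sup>+v. ennreal (v ^ m) * indicator {0<..<u} v \<partial>lborel) = ennreal (u ^ Suc m / Suc m)"
        using power_int[of 0 u m] by simp
      moreover have "0 \<le> ln (a / u)" using True by auto
      moreover have "\<psi> u * (u ^ Suc m / Suc m) = Suc n / Suc m * (u ^ m * ln (a / u) ^ n)"
      proof -
        have "\<psi> u * (u ^ Suc m / Suc m) = (Suc n * ln (a / u) ^ n / u) * (u * u ^ m / Suc m)"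
          unfolding \<psi>_def by (simp only: power_Suc)
        also have "\<dots> = Suc n * ln (a / u) ^ n * u ^ m / Suc m"
          using True by (intro cancel_aux) auto
        finally show ?thesis by (simp add: mult_ac)
      qed
      moreover have "0 \<le> \<psi> u" using True \<open>0 \<le> ln (a / u)\<close> unfolding \<psi>_def by auto
      ultimately show ?thesis using True by (simp add: ennreal_mult[symmetric] mult_ac)
    qed simp
  qed
  also have "\<dots> = ennreal (Suc n / Suc m) * ennreal (fact n * a ^ Suc m / (Suc m) ^ Suc n)"
    by (subst nn_integral_cmult) (auto simp: Suc)
  also have "\<dots> = ennreal (fact (Suc n) * a ^ Suc m / (Suc m) ^ Suc (Suc n))"
    using assms by (subst ennreal_mult[symmetric]) (auto simp: field_simps)
  finally show ?case .
qed

definition GG :: "nat \<Rightarrow> nat \<Rightarrow> ennreal" where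
  "GG q k = (\<integral>\<^sup>+t. ennreal (t ^ k * fq q t) * indicator {0<..<1} t \<partial>lborel)"

lemma GG_eq: "GG q k = ennreal (hh q (Suc k) / Suc k)"
proof (induction q arbitrary: k)
  case 0
  show ?case using power_int[of 0 1 k] by (simp add: GG_def fq_def)
next
  case (Suc q)
  define \<phi> where "\<phi> = (\<lambda>s::real. fq q s / (1 - s))"
  have [measurable]: "\<phi> \<in> borel_measurable borel" unfolding \<phi>_def by measurable
  have "GG (Suc q) k = (\<integral>\<^sup>+t. ennreal (t ^ k) * indicator {0<..<1} t * (\<integral>\<^sup>+s. ennreal (\<phi> s) * indicator {0<..<t} s \<partial>lborel) \<partial>lborel)"
    unfolding GG_def
  proof (intro nn_integral_cong)
    fix t :: real
    show "ennreal (t ^ k * fq (Suc q) t) * indicator {0<..<1} t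
        = ennreal (t ^ k) * indicator {0<..<1} t * (\<integral>\<^sup>+s. ennreal (\<phi> s) * indicator {0<..<t} s \<partial>lborel)"
    proof (cases "t \<in> {0<..<1}")
      case True
      then have "(\<integral>\<^sup>+s. ennreal (\<phi> s) * indicator {0<..<t} s \<partial>lborel) = ennreal (fq (Suc q) t)"
        unfolding \<phi>_def by (intro f_FTC) auto
      moreover have "0 \<le> fq (Suc q) t" using True by (intro fq_nonneg) auto
      ultimately show ?thesis using True by (simp add: ennreal_mult)
    qed simp
  qed
  also have "\<dots> = (\<integral>\<^sup>+s. ennreal (\<phi> s) * indicator {0<..<1} s * (\<integral>\<^sup>+t. ennreal (t ^ k) * indicator {s<..<1} t \<partial>lborel) \<partial>lborel)"
    by (rule swap_integrals) auto
  also have "\<dots> = (\<integral>\<^sup>+s. ennreal (1 / Suc k) * (\<Sum>i<Suc k. ennreal (s ^ i * fq q s) * indicator {0<..<1} s) \<partial>lborel)"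
  proof (intro nn_integral_cong)
    fix s :: real
    show "ennreal (\<phi> s) * indicator {0<..<1} s * (\<integral>\<^sup>+t. ennreal (t ^ k) * indicator {s<..<1} t \<partial>lborel)
        = ennreal (1 / Suc k) * (\<Sum>i<Suc k. ennreal (s ^ i * fq q s) * indicator {0<..<1} s)"
    proof (cases "s \<in> {0<..<1}")
      case True
      then have INT: "(\<integral>\<^sup>+t. ennreal (t ^ k) * indicator {s<..<1} t \<partial>lborel) = ennreal ((1 - s ^ Suc k) / Suc k)"
        using power_int[of s 1 k] by simp
      have fq0: "0 \<le> fq q s" using True by (intro fq_nonneg) auto
      have EQ: "\<phi> s * ((1 - s ^ Suc k) / Suc k) = 1 / Suc k * (\<Sum>i<Suc k. s ^ i * fq q s)"
      proof -
        have "(\<Sum>i<Suc k. s ^ i * fq q s) = (\<Sum>i<Suc k. s ^ i) * fq q s" by (rule sum_distrib_right[symmetric])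
        also have "(\<Sum>i<Suc k. s ^ i) = (1 - s ^ Suc k) / (1 - s)" using True by (subst sum_gp_strict) auto
        finally show ?thesis unfolding \<phi>_def by (simp add: mult_ac)
      qed
      have p0: "0 \<le> \<phi> s" using True fq0 unfolding \<phi>_def by auto
      have p1: "0 \<le> (1 - s ^ Suc k) / Suc k"
      proof -
        have "s ^ Suc k \<le> 1" using True by (intro power_le_one) auto
        then show ?thesis by (intro divide_nonneg_nonneg) auto
      qed
      have ind: "indicator {0<..<1} s = (1::ennreal)" using True by simp
      have "ennreal (\<phi> s) * ennreal ((1 - s ^ Suc k) / Suc k) = ennreal (\<phi> s * ((1 - s ^ Suc k) / Suc k))"
        using ennreal_mult[OF p0 p1] by simp
      also have "\<dots> = ennreal (1 / Suc k * (\<Sum>i<Suc k. s ^ i * fq q s))" by (simp only: EQ)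
      also have "\<dots> = ennreal (1 / Suc k) * ennreal (\<Sum>i<Suc k. s ^ i * fq q s)"
        using True fq0 by (intro ennreal_mult sum_nonneg mult_nonneg_nonneg zero_le_power) auto
      also have "ennreal (\<Sum>i<Suc k. s ^ i * fq q s) = (\<Sum>i<Suc k. ennreal (s ^ i * fq q s))"
        using True fq0 by (subst sum_ennreal) auto
      finally show ?thesis unfolding ind INT by simp
    qed simp
  qed
  also have "\<dots> = ennreal (1 / Suc k) * (\<Sum>i<Suc k. GG q i)"
  proof -
    have "(\<integral>\<^sup>+s. (\<Sum>i<Suc k. ennreal (s ^ i * fq q s) * indicator {0<..<1} s) \<partial>lborel) = (\<Sum>i<Suc k. GG q i)"
      unfolding GG_def by (rule nn_integral_sum) measurable
    moreover have "(\<integral>\<^sup>+s. ennreal (1 / Suc k) * (\<Sum>i<Suc k. ennreal (s ^ i * fq q s) * indicator {0<..<1} s) \<partial>lborel)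
       = ennreal (1 / Suc k) * (\<integral>\<^sup>+s. (\<Sum>i<Suc k. ennreal (s ^ i * fq q s) * indicator {0<..<1} s) \<partial>lborel)"
      by (rule nn_integral_cmult) measurable
    ultimately show ?thesis by simp
  qed
  also have "\<dots> = ennreal (1 / Suc k) * ennreal (\<Sum>i<Suc k. hh q (Suc i) / Suc i)"
    by (simp only: Suc.IH, subst sum_ennreal) (auto intro!: divide_nonneg_nonneg hh_nonneg)
  also have "\<dots> = ennreal (hh (Suc q) (Suc k) / Suc k)"
  proof -
    have h: "hh (Suc q) (Suc k) = (\<Sum>i<Suc k. hh q (Suc i) / Suc i)"
      unfolding hh.simps(2) One_nat_def sum.atLeast1_atMost_eq ..
    have "0 \<le> (\<Sum>i<Suc k. hh q (Suc i) / Suc i)" by (intro sum_nonneg divide_nonneg_nonneg hh_nonneg) auto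
    then show ?thesis unfolding h by (subst ennreal_mult[symmetric]) auto
  qed
  finally show ?case .
qed



lemma inner_int:
  assumes "0 < a" "a < 1"
  shows "(\<integral>\<^sup>+t. ennreal (ln (a / t) ^ n / (1 - t)) * indicator {0<..<a} t \<partial>lborel)
       = (\<Sum>m. ennreal (fact n * a ^ Suc m / (Suc m) ^ Suc n))"
proof -
  have "(\<integral>\<^sup>+t. ennreal (ln (a / t) ^ n / (1 - t)) * indicator {0<..<a} t \<partial>lborel)
      = (\<integral>\<^sup>+t. (\<Sum>m. ennreal (t ^ m * ln (a / t) ^ n) * indicator {0<..<a} t) \<partial>lborel)"
  proof (intro nn_integral_cong)
    fix t :: real
    show "ennreal (ln (a / t) ^ n / (1 - t)) * indicator {0<..<a} t
        = (\<Sum>m. ennreal (t ^ m * ln (a / t) ^ n) * indicator {0<..<a} t)"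
    proof (cases "t \<in> {0<..<a}")
      case True
      have "(\<lambda>m. t ^ m) sums (1 / (1 - t))" using True assms by (intro geometric_sums) auto
      then have "(\<lambda>m. t ^ m * ln (a / t) ^ n) sums (1 / (1 - t) * ln (a / t) ^ n)" by (rule sums_mult2)
      moreover have "0 \<le> ln (a / t)" using True by auto
      ultimately have "(\<Sum>m. ennreal (t ^ m * ln (a / t) ^ n)) = ennreal (1 / (1 - t) * ln (a / t) ^ n)"
        using True by (intro suminf_ennreal_eq) auto
      then show ?thesis using True by simp
    qed simp
  qed
  also have "\<dots> = (\<Sum>m. (\<integral>\<^sup>+t. ennreal (t ^ m * ln (a / t) ^ n) * indicator {0<..<a} t \<partial>lborel))"
    by (rule nn_integral_suminf) measurable
  also have "\<dots> = (\<Sum>m. ennreal (fact n * a ^ Suc m / (Suc m) ^ Suc n))"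
    using assms by (simp add: P_int)
  finally show ?thesis .
qed

lemma E2_sets: "E2 \<in> sets (lborel \<Otimes>\<^sub>M lborel)"
proof -
  have "E2 = {x\<in>space (lborel \<Otimes>\<^sub>M lborel). 0 < fst x \<and> fst x < snd x \<and> snd x < (1::real)}"
    by (auto simp: E2_def space_pair_measure)
  also have "\<dots> \<in> sets (lborel \<Otimes>\<^sub>M lborel)" by measurable
  finally show ?thesis .
qed

lemma main_nn:
  fixes q n :: nat
  defines "F \<equiv> (\<lambda>t::real\<times>real. (ln (1 / (1 - snd t))) ^ q * (ln (snd t / fst t)) ^ n / ((1 - fst t) * snd t))"
  shows "(\<integral>\<^sup>+x. ennreal (indicator E2 x *\<^sub>R F x) \<partial>lborel)
       = (\<Sum>m. ennreal (fact q * fact n * (hh q (Suc m) / (Suc m) ^ (n + 2))))"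
proof -
  have Fm[measurable]: "(\<lambda>x. ennreal (indicator E2 x *\<^sub>R F x)) \<in> borel_measurable (lborel \<Otimes>\<^sub>M lborel)"
    unfolding F_def using E2_sets by measurable
  have "(\<integral>\<^sup>+x. ennreal (indicator E2 x *\<^sub>R F x) \<partial>lborel)
      = (\<integral>\<^sup>+x. ennreal (indicator E2 x *\<^sub>R F x) \<partial>(lborel \<Otimes>\<^sub>M lborel))"
    by (simp only: lborel_prod)
  also have "\<dots> = (\<integral>\<^sup>+t2. (\<integral>\<^sup>+t1. ennreal (indicator E2 (t1, t2) *\<^sub>R F (t1, t2)) \<partial>lborel) \<partial>lborel)"
    by (rule lborel_pair.nn_integral_snd[symmetric]) (rule Fm)
  also have "\<dots> = (\<integral>\<^sup>+t2. (\<Sum>m. ennreal (fact q * fact n / (Suc m) ^ Suc n) * (ennreal (t2 ^ m * fq q t2) * indicator {0<..<1} t2)) \<partial>lborel)"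
  proof (intro nn_integral_cong)
    fix t2 :: real
    show "(\<integral>\<^sup>+t1. ennreal (indicator E2 (t1, t2) *\<^sub>R F (t1, t2)) \<partial>lborel)
        = (\<Sum>m. ennreal (fact q * fact n / (Suc m) ^ Suc n) * (ennreal (t2 ^ m * fq q t2) * indicator {0<..<1} t2))"
    proof (cases "t2 \<in> {0<..<1}")
      case False
      then have "\<And>t1. indicator E2 (t1, t2) = (0::real)" by (auto simp: E2_def)
      then show ?thesis using False by simp
    next
      case True
      define c where "c = LL t2 ^ q / t2"
      have c0: "0 \<le> c" unfolding c_def using True by (auto intro!: divide_nonneg_nonneg zero_le_power LL_nonneg)
      have "(\<integral>\<^sup>+t1. ennreal (indicator E2 (t1, t2) *\<^sub>R F (t1, t2)) \<partial>lborel)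
          = (\<integral>\<^sup>+t1. ennreal c * (ennreal (ln (t2 / t1) ^ n / (1 - t1)) * indicator {0<..<t2} t1) \<partial>lborel)"
      proof (intro nn_integral_cong)
        fix t1 :: real
        show "ennreal (indicator E2 (t1, t2) *\<^sub>R F (t1, t2))
            = ennreal c * (ennreal (ln (t2 / t1) ^ n / (1 - t1)) * indicator {0<..<t2} t1)"
        proof (cases "t1 \<in> {0<..<t2}")
          case False
          then show ?thesis by (auto simp: E2_def indicator_def)
        next
          case True2: True
          have e: "(t1, t2) \<in> E2" using True True2 by (auto simp: E2_def)
          have l: "ln (1 / (1 - t2)) = LL t2" unfolding LL_def using True by (simp add: ln_div)
          have "F (t1, t2) = ln (1 / (1 - t2)) ^ q * ln (t2 / t1) ^ n / ((1 - t1) * t2)"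
            unfolding F_def by simp
          also have "\<dots> = c * (ln (t2 / t1) ^ n / (1 - t1))"
            unfolding c_def l by (simp add: field_simps)
          finally have Feq: "F (t1, t2) = c * (ln (t2 / t1) ^ n / (1 - t1))" .
          have X0: "0 \<le> ln (t2 / t1) ^ n / (1 - t1)" using True True2 by auto
          have i1: "indicator E2 (t1, t2) = (1::real)" using e by simp
          have i2: "indicator {0<..<t2} t1 = (1::ennreal)" using True2 by simp
          show ?thesis unfolding i1 i2 scaleR_one mult_1_right Feq by (rule ennreal_mult[OF c0 X0])
        qed
      qed
      also have "\<dots> = ennreal c * (\<integral>\<^sup>+t1. ennreal (ln (t2 / t1) ^ n / (1 - t1)) * indicator {0<..<t2} t1 \<partial>lborel)"
        by (rule nn_integral_cmult) measurable
      also have "\<dots> = ennreal c * (\<Sum>m. ennreal (fact n * t2 ^ Suc m / (Suc m) ^ Suc n))"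
        using True by (simp add: inner_int)
      also have "\<dots> = (\<Sum>m. ennreal c * ennreal (fact n * t2 ^ Suc m / (Suc m) ^ Suc n))"
        by (rule ennreal_suminf_cmult[symmetric])
      also have "\<dots> = (\<Sum>m. ennreal (fact q * fact n / (Suc m) ^ Suc n) * (ennreal (t2 ^ m * fq q t2) * indicator {0<..<1} t2))"
      proof (intro suminf_cong)
        fix m
        have fq0: "0 \<le> fq q t2" using True by (intro fq_nonneg) auto
        have "c * (fact n * t2 ^ Suc m / (Suc m) ^ Suc n) = fact q * fact n / (Suc m) ^ Suc n * (t2 ^ m * fq q t2)"
          unfolding c_def fq_def using True by (simp add: field_simps)
        then show "ennreal c * ennreal (fact n * t2 ^ Suc m / (Suc m) ^ Suc n)
            = ennreal (fact q * fact n / (Suc m) ^ Suc n) * (ennreal (t2 ^ m * fq q t2) * indicator {0<..<1} t2)"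
          using True c0 fq0 by (simp add: ennreal_mult[symmetric])
      qed
      finally show ?thesis .
    qed
  qed
  also have "\<dots> = (\<Sum>m. (\<integral>\<^sup>+t2. ennreal (fact q * fact n / (Suc m) ^ Suc n) * (ennreal (t2 ^ m * fq q t2) * indicator {0<..<1} t2) \<partial>lborel))"
    by (rule nn_integral_suminf) measurable
  also have "\<dots> = (\<Sum>m. ennreal (fact q * fact n / (Suc m) ^ Suc n) * GG q m)"
    unfolding GG_def by (subst nn_integral_cmult) auto
  also have "\<dots> = (\<Sum>m. ennreal (fact q * fact n * (hh q (Suc m) / (Suc m) ^ (n + 2))))"
  proof (intro suminf_cong)
    fix m
    have "fact q * fact n / (Suc m) ^ Suc n * (hh q (Suc m) / Suc m) = fact q * fact n * (hh q (Suc m) / (Suc m) ^ (n + 2))"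
      by (simp add: field_simps)
    then show "ennreal (fact q * fact n / (Suc m) ^ Suc n) * GG q m = ennreal (fact q * fact n * (hh q (Suc m) / (Suc m) ^ (n + 2)))"
      unfolding GG_eq by (subst ennreal_mult[symmetric]) (auto intro!: divide_nonneg_nonneg hh_nonneg)
  qed
  finally show ?thesis .
qed





lemma mzv_term_Nil[simp]: "mzv_term [] ks = 1"
  by (simp add: mzv_term_def)

lemma mzv_term_Cons[simp]: "mzv_term (a # as) (k # ks) = 1 / (real k) ^ a * mzv_term as ks"
  unfolding mzv_term_def length_Cons prod.lessThan_Suc_shift by simp

lemma mzv_term_append:
  "length as = length ks \<Longrightarrow> mzv_term (as @ bs) (ks @ ls) = mzv_term as ks * mzv_term bs ls"
proof (induction as arbitrary: ks)
  case Nil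
  then show ?case by simp
next
  case (Cons a as)
  then obtain k ks' where "ks = k # ks'" by (cases ks) auto
  with Cons show ?case by simp
qed

lemma mzv_term_rep: "mzv_term (replicate a 1) (replicate a j) = (1 / real j) ^ a"
  by (induction a) (auto simp: power_one_over)

lemma mzv_term_ones: "length xs = q \<Longrightarrow> mzv_term (replicate q 1) xs = prod_list (map (\<lambda>x. 1 / real x) xs)"
proof (induction xs arbitrary: q)
  case Nil
  then show ?case by simp
next
  case (Cons x xs)
  then obtain q' where "q = Suc q'" by (cases q) auto
  with Cons show ?case by simp
qed

lemma mzv_term_last:
  assumes "length bs = length ks"
  shows "mzv_term (bs @ [b + c]) (ks @ [k]) = mzv_term (bs @ [b]) (ks @ [k]) * (1 / real k) ^ c"
  using assms by (simp add: mzv_term_append power_add power_one_over)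

definition W :: "nat \<Rightarrow> nat \<Rightarrow> nat list set" where
  "W q k = {xs. length xs = q \<and> sorted_wrt (\<le>) xs \<and> (\<forall>x\<in>set xs. 1 \<le> x \<and> x \<le> k)}"

lemma finite_W: "finite (W q k)"
proof (rule finite_subset)
  show "W q k \<subseteq> {xs. set xs \<subseteq> {..k} \<and> length xs = q}" by (auto simp: W_def)
  show "finite {xs. set xs \<subseteq> {..k} \<and> length xs = q}" by (rule finite_lists_length_eq) simp
qed

lemma W_0[simp]: "W 0 k = {[]}"
  by (auto simp: W_def)

lemma hh_W: "hh q k = (\<Sum>xs\<in>W q k. prod_list (map (\<lambda>x. 1 / real x) xs))"
proof (induction q arbitrary: k)
  case 0
  then show ?case by simp
next
  case (Suc q)
  have "hh (Suc q) k = (\<Sum>j=1..k. hh q j / j)" by (simp add: hh.simps)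
  also have "\<dots> = (\<Sum>j=1..k. \<Sum>xs\<in>W q j. prod_list (map (\<lambda>x. 1 / real x) xs) * (1 / j))"
    by (simp add: Suc sum_divide_distrib)
  also have "\<dots> = (\<Sum>(j, xs)\<in>Sigma {1..k} (W q). prod_list (map (\<lambda>x. 1 / real x) xs) * (1 / j))"
    by (rule sum.Sigma) (auto simp: finite_W)
  also have "\<dots> = (\<Sum>ys\<in>W (Suc q) k. prod_list (map (\<lambda>x. 1 / real x) ys))"
  proof (rule sum.reindex_bij_witness[where i = "\<lambda>ys. (last ys, butlast ys)" and j = "\<lambda>(j, xs). xs @ [j]"])
    fix ys assume ys: "ys \<in> W (Suc q) k"
    then have ne: "ys \<noteq> []" by (auto simp: W_def)
    then have eq: "ys = butlast ys @ [last ys]" by simp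
    show "(case (last ys, butlast ys) of (j, xs) \<Rightarrow> xs @ [j]) = ys" using ne by simp
    have "sorted_wrt (\<le>) (butlast ys @ [last ys])" "length ys = Suc q" "\<forall>x\<in>set (butlast ys @ [last ys]). 1 \<le> x \<and> x \<le> k"
      using ys eq by (auto simp: W_def)
    then show "(last ys, butlast ys) \<in> Sigma {1..k} (W q)"
      by (auto simp: W_def sorted_wrt_append)
  next
    fix a assume a: "a \<in> Sigma {1..k} (W q)"
    then show "(last (case a of (j, xs) \<Rightarrow> xs @ [j]), butlast (case a of (j, xs) \<Rightarrow> xs @ [j])) = a" by auto
    show "(case a of (j, xs) \<Rightarrow> xs @ [j]) \<in> W (Suc q) k"
      using a by (fastforce simp: W_def sorted_wrt_append intro: le_trans)
    show "prod_list (map (\<lambda>x. 1 / real x) (case a of (j, xs) \<Rightarrow> xs @ [j]))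
        = (case a of (j, xs) \<Rightarrow> prod_list (map (\<lambda>x. 1 / real x) xs) * (1 / real j))"
      by (cases a) simp
  qed
  finally show ?case .
qed



fun expand :: "nat list \<Rightarrow> nat list \<Rightarrow> nat list" where
  "expand (a # as) (j # js) = replicate a j @ expand as js"
| "expand _ _ = []"

fun grp :: "nat list \<Rightarrow> nat list \<times> nat list" where
  "grp [] = ([], [])"
| "grp (k # ks) = (case grp ks of
      (a # as, j # js) \<Rightarrow> if j = k then (Suc a # as, j # js) else (1 # a # as, k # j # js)
    | _ \<Rightarrow> ([1], [k]))"

lemma sorted_hd_le: "sorted_wrt (\<le>) ks \<Longrightarrow> ks \<noteq> [] \<Longrightarrow> x \<in> set ks \<Longrightarrow> hd ks \<le> (x::nat)"
  by (cases ks) auto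

lemma grp_props:
  "length (fst (grp ks)) = length (snd (grp ks)) \<and> sum_list (fst (grp ks)) = length ks
   \<and> (\<forall>a\<in>set (fst (grp ks)). 1 \<le> a) \<and> set (snd (grp ks)) = set ks
   \<and> expand (fst (grp ks)) (snd (grp ks)) = ks
   \<and> (ks \<noteq> [] \<longrightarrow> snd (grp ks) \<noteq> [] \<and> hd (snd (grp ks)) = hd ks)
   \<and> (sorted_wrt (\<le>) ks \<longrightarrow> sorted_wrt (<) (snd (grp ks)))"
proof (induction ks)
  case Nil
  then show ?case by simp
next
  case (Cons k ks)
  obtain \<alpha> js where g: "grp ks = (\<alpha>, js)" by (cases "grp ks")
  show ?case
  proof (cases "ks = []")
    case True
    then show ?thesis by simp
  next
    case False
    with Cons.IH g have ne: "js \<noteq> []" and hd: "hd js = hd ks" by auto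
    from Cons.IH g have len: "length \<alpha> = length js" by simp
    from ne obtain j js' where js: "js = j # js'" by (cases js) auto
    from len js obtain a \<alpha>' where al: "\<alpha> = a # \<alpha>'" by (cases \<alpha>) auto
    from hd js have jk: "j = hd ks" by simp
    have IH: "length \<alpha> = length js" "sum_list \<alpha> = length ks" "\<forall>a\<in>set \<alpha>. 1 \<le> a" "set js = set ks"
      "expand \<alpha> js = ks" "sorted_wrt (\<le>) ks \<longrightarrow> sorted_wrt (<) js"
      using Cons.IH g by auto
    show ?thesis
    proof (cases "j = k")
      case True
      have "grp (k # ks) = (Suc a # \<alpha>', j # js')" using g js al True by simp
      moreover have "k \<in> set ks" using True jk False by (metis hd_in_set)
      ultimately show ?thesis using IH js al True by auto
    next
      case jk2: False
      have G: "grp (k # ks) = (1 # a # \<alpha>', k # j # js')" using g js al jk2 by simp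
      have "sorted_wrt (<) (k # j # js')" if s: "sorted_wrt (\<le>) (k # ks)"
      proof -
        have "\<forall>x\<in>set ks. hd ks \<le> x" using s False sorted_hd_le by auto
        moreover have "k \<le> hd ks" using s False by (cases ks) auto
        moreover have "sorted_wrt (<) (j # js')" using IH js s by simp
        ultimately have "\<forall>x\<in>set (j # js'). k < x" using jk jk2 IH(4) js by force
        then show ?thesis using \<open>sorted_wrt (<) (j # js')\<close> by simp
      qed
      then show ?thesis using G IH js al by auto
    qed
  qed
qed

lemma grp_rep:
  assumes "grp rest = (\<beta>, \<gamma>)" "length \<beta> = length \<gamma>" "\<gamma> = [] \<or> hd \<gamma> \<noteq> j"
  shows "grp (replicate (Suc a) j @ rest) = (Suc a # \<beta>, j # \<gamma>)"
proof (induction a)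
  case 0
  show ?case
  proof (cases \<gamma>)
    case Nil
    then show ?thesis using assms by simp
  next
    case (Cons g gs)
    with assms obtain b bs where "\<beta> = b # bs" by (cases \<beta>) auto
    with Cons assms show ?thesis by simp
  qed
next
  case (Suc a)
  then show ?case by simp
qed

lemma expand_length: "length \<alpha> = length js \<Longrightarrow> length (expand \<alpha> js) = sum_list \<alpha>"
proof (induction \<alpha> arbitrary: js)
  case (Cons a \<alpha>)
  then show ?case by (cases js) auto
qed simp

lemma expand_subset: "set (expand \<alpha> js) \<subseteq> set js"
proof (induction \<alpha> arbitrary: js)
  case (Cons a \<alpha>)
  then show ?case by (cases js) auto
qed simp

lemma expand_set: "length \<alpha> = length js \<Longrightarrow> \<forall>a\<in>set \<alpha>. 1 \<le> a \<Longrightarrow> set (expand \<alpha> js) = set js"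
proof (induction \<alpha> arbitrary: js)
  case (Cons a \<alpha>)
  then show ?case by (cases js) auto
qed simp

lemma expand_sorted: "length \<alpha> = length js \<Longrightarrow> sorted_wrt (<) js \<Longrightarrow> sorted_wrt (\<le>) (expand \<alpha> js)"
proof (induction \<alpha> arbitrary: js)
  case (Cons a \<alpha>)
  then obtain j js' where js: "js = j # js'" by (cases js) auto
  have "sorted_wrt (\<le>) (expand \<alpha> js')" using Cons js by simp
  moreover have "\<forall>y\<in>set (expand \<alpha> js'). j \<le> y" using expand_subset[of \<alpha> js'] Cons.prems js by fastforce
  ultimately show ?case using js by (auto simp: sorted_wrt_append)
qed simp

lemma expand_last: "length \<alpha> = length js \<Longrightarrow> \<alpha> \<noteq> [] \<Longrightarrow> \<forall>a\<in>set \<alpha>. 1 \<le> a \<Longrightarrow> last (expand \<alpha> js) = last js"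
proof (induction \<alpha> arbitrary: js)
  case (Cons a \<alpha>)
  then obtain j js' where js: "js = j # js'" by (cases js) auto
  show ?case
  proof (cases "\<alpha> = []")
    case True
    then show ?thesis using Cons js by simp
  next
    case False
    then have "expand \<alpha> js' \<noteq> []" using expand_length[of \<alpha> js'] Cons.prems js
      by (cases \<alpha>) auto
    moreover have "js' \<noteq> []" using False Cons.prems js by auto
    ultimately show ?thesis using Cons False js by simp
  qed
qed simp

lemma expand_mzv: "length \<alpha> = length js \<Longrightarrow> mzv_term (replicate (sum_list \<alpha>) 1) (expand \<alpha> js) = mzv_term \<alpha> js"
proof (induction \<alpha> arbitrary: js)
  case (Cons a \<alpha>)
  then obtain j js' where js: "js = j # js'" by (cases js) auto
  have "mzv_term (replicate (sum_list (a # \<alpha>)) 1) (expand (a # \<alpha>) js)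
      = mzv_term (replicate a 1 @ replicate (sum_list \<alpha>) 1) (replicate a j @ expand \<alpha> js')"
    using js by (simp add: replicate_add)
  also have "\<dots> = (1 / real j) ^ a * mzv_term \<alpha> js'"
    using Cons js by (simp add: mzv_term_append mzv_term_rep mzv_term_rep[unfolded One_nat_def])
  finally show ?case using js by (simp add: power_one_over)
qed simp

lemma expand_grp: "length \<alpha> = length js \<Longrightarrow> \<forall>a\<in>set \<alpha>. 1 \<le> a \<Longrightarrow> sorted_wrt (<) js \<Longrightarrow> grp (expand \<alpha> js) = (\<alpha>, js)"
proof (induction \<alpha> arbitrary: js)
  case (Cons a \<alpha>)
  then obtain j js' where js: "js = j # js'" by (cases js) auto
  from Cons.prems obtain a' where a: "a = Suc a'" by (cases a) auto
  have IH: "grp (expand \<alpha> js') = (\<alpha>, js')" using Cons js by simp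
  have "js' = [] \<or> hd js' \<noteq> j" using Cons.prems js by (cases js') auto
  then have "grp (replicate (Suc a') j @ expand \<alpha> js') = (Suc a' # \<alpha>, j # js')"
    using IH Cons.prems js by (intro grp_rep) auto
  then show ?case using js a by simp
qed simp



definition cc :: "nat \<Rightarrow> nat \<Rightarrow> nat \<Rightarrow> real" where
  "cc q n m = hh q (Suc m) / (real (Suc m)) ^ (n + 2)"

lemma cc_nonneg: "0 \<le> cc q n m"
  unfolding cc_def by (intro divide_nonneg_nonneg hh_nonneg) auto

lemma cc_summable: "summable (cc q n)"
proof (rule summableI_nonneg_bounded[where x = "BB q"])
  fix N
  have "(\<Sum>m<N. cc q n m) \<le> (\<Sum>m<N. hh q (Suc m) / (real (Suc m))^2)"
  proof (intro sum_mono)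
    fix m
    have "(real (Suc m))^2 \<le> (real (Suc m)) ^ (n + 2)" by (intro power_increasing) auto
    then show "cc q n m \<le> hh q (Suc m) / (real (Suc m))^2"
      unfolding cc_def by (intro divide_left_mono hh_nonneg) auto
  qed
  also have "\<dots> = (\<Sum>k=1..N. hh q k / (real k)^2)"
    unfolding One_nat_def sum.atLeast1_atMost_eq ..
  also have "\<dots> \<le> BB q" by (rule hh_bound)
  finally show "(\<Sum>m<N. cc q n m) \<le> BB q" .
qed (rule cc_nonneg)

definition Aset :: "nat \<Rightarrow> nat list set" where
  "Aset r = {ks. length ks = r \<and> sorted_wrt (\<le>) ks \<and> (\<forall>k\<in>set ks. 1 \<le> k)}"

lemma zeta_star_has_sum:
  "(mzv_term (replicate q 1 @ [n + 2]) has_sum (\<Sum>m. cc q n m)) (Aset (Suc q))"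
proof -
  define f where "f = (\<lambda>(m, xs). prod_list (map (\<lambda>x. 1 / real x) xs) / (real (Suc m)) ^ (n + 2))"
  have fib: "((\<lambda>xs. f (m, xs)) has_sum cc q n m) (W q (Suc m))" for m
  proof -
    have "cc q n m = (\<Sum>xs\<in>W q (Suc m). f (m, xs))"
      unfolding cc_def f_def hh_W by (simp add: sum_divide_distrib)
    then show ?thesis using finite_W by (simp add: has_sum_finiteI)
  qed
  have ccs: "(cc q n has_sum (\<Sum>m. cc q n m)) UNIV"
    using cc_summable by (intro sums_nonneg_imp_has_sum) (auto simp: summable_sums cc_nonneg)
  have f0: "0 \<le> f (m, xs)" if "xs \<in> W q (Suc m)" for m xs
    unfolding f_def by (auto intro!: divide_nonneg_nonneg prod_list_nonneg)
  have "f summable_on Sigma UNIV (\<lambda>m. W q (Suc m))"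
    using fib ccs f0 by (intro summable_on_SigmaI[where g = "cc q n"]) (auto simp: has_sum_imp_summable)
  then have fs: "(f has_sum (\<Sum>m. cc q n m)) (Sigma UNIV (\<lambda>m. W q (Suc m)))"
    using fib ccs by (intro has_sum_SigmaI[where g = "cc q n"]) auto
  have "(mzv_term (replicate q 1 @ [n + 2]) has_sum (\<Sum>m. cc q n m)) (Aset (Suc q))
      = (f has_sum (\<Sum>m. cc q n m)) (Sigma UNIV (\<lambda>m. W q (Suc m)))"
  proof (rule has_sum_reindex_bij_witness[where i = "\<lambda>(m, xs). xs @ [Suc m]" and j = "\<lambda>ks. (last ks - 1, butlast ks)"])
    fix ks assume ks: "ks \<in> Aset (Suc q)"
    then have ne: "ks \<noteq> []" by (auto simp: Aset_def)
    then have eq: "ks = butlast ks @ [last ks]" by simp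
    have l1: "1 \<le> last ks" using ks ne by (auto simp: Aset_def)
    show "(case (last ks - 1, butlast ks) of (m, xs) \<Rightarrow> xs @ [Suc m]) = ks"
      using l1 ne by simp
    have "sorted_wrt (\<le>) (butlast ks @ [last ks])" "length ks = Suc q" "\<forall>x\<in>set (butlast ks @ [last ks]). 1 \<le> x"
      using ks eq by (auto simp: Aset_def)
    then show "(last ks - 1, butlast ks) \<in> Sigma UNIV (\<lambda>m. W q (Suc m))"
      using l1 by (auto simp: W_def sorted_wrt_append)
    have "mzv_term (replicate q 1 @ [n + 2]) ks = mzv_term (replicate q 1 @ [n + 2]) (butlast ks @ [last ks])"
      using eq by simp
    also have "\<dots> = prod_list (map (\<lambda>x. 1 / real x) (butlast ks)) * (1 / real (last ks) ^ (n + 2))"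
      using ks by (subst mzv_term_append) (auto simp: Aset_def mzv_term_ones mzv_term_ones[unfolded One_nat_def])
    also have "\<dots> = f (last ks - 1, butlast ks)"
      unfolding f_def using l1 by simp
    finally show "f (last ks - 1, butlast ks) = mzv_term (replicate q 1 @ [n + 2]) ks" by simp
  next
    fix b assume b: "b \<in> Sigma UNIV (\<lambda>m. W q (Suc m))"
    then show "(last (case b of (m, xs) \<Rightarrow> xs @ [Suc m]) - 1, butlast (case b of (m, xs) \<Rightarrow> xs @ [Suc m])) = b"
      by auto
    show "(case b of (m, xs) \<Rightarrow> xs @ [Suc m]) \<in> Aset (Suc q)"
      using b by (auto simp: W_def Aset_def sorted_wrt_append)
  qed simp
  with fs show ?thesis by simp
qed



lemma len_le_sum: "\<forall>a\<in>set \<alpha>. 1 \<le> a \<Longrightarrow> length \<alpha> \<le> sum_list (\<alpha>::nat list)"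
  by (induction \<alpha>) auto

definition Cset :: "nat \<Rightarrow> nat list set" where
  "Cset m = {\<alpha>. (\<forall>a\<in>set \<alpha>. 1 \<le> a) \<and> sum_list \<alpha> = m}"

definition Bset :: "nat list \<Rightarrow> nat list set" where
  "Bset \<alpha> = {js. length js = length \<alpha> \<and> sorted_wrt (<) js \<and> (\<forall>j\<in>set js. 1 \<le> j)}"

lemma finite_Cset: "finite (Cset m)"
proof (rule finite_subset)
  show "Cset m \<subseteq> {xs. set xs \<subseteq> {..m} \<and> length xs \<le> m}"
  proof
    fix \<alpha> assume a: "\<alpha> \<in> Cset m"
    then have "\<forall>x\<in>set \<alpha>. x \<le> m" unfolding Cset_def using member_le_sum_list[of _ \<alpha>] by auto
    moreover have "length \<alpha> \<le> m" using a len_le_sum unfolding Cset_def by auto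
    ultimately show "\<alpha> \<in> {xs. set xs \<subseteq> {..m} \<and> length xs \<le> m}" by auto
  qed
  show "finite {xs. set xs \<subseteq> {..m} \<and> length xs \<le> m}" by (rule finite_lists_length_le) simp
qed

lemma comp_has_sum:
  "((\<lambda>(\<alpha>, js). mzv_term (butlast \<alpha> @ [last \<alpha> + n + 1]) js) has_sum (\<Sum>m. cc q n m)) (Sigma (Cset (Suc q)) Bset)"
proof -
  have "((\<lambda>(\<alpha>, js). mzv_term (butlast \<alpha> @ [last \<alpha> + n + 1]) js) has_sum (\<Sum>m. cc q n m)) (Sigma (Cset (Suc q)) Bset)
      = (mzv_term (replicate q 1 @ [n + 2]) has_sum (\<Sum>m. cc q n m)) (Aset (Suc q))"
  proof (rule has_sum_reindex_bij_witness[where i = grp and j = "\<lambda>(\<alpha>, js). expand \<alpha> js"])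
    fix a assume a: "a \<in> Sigma (Cset (Suc q)) Bset"
    obtain \<alpha> js where ae: "a = (\<alpha>, js)" by (cases a)
    have al: "\<forall>x\<in>set \<alpha>. 1 \<le> x" "sum_list \<alpha> = Suc q" "length js = length \<alpha>" "sorted_wrt (<) js"
      "\<forall>j\<in>set js. 1 \<le> j"
      using a ae by (auto simp: Cset_def Bset_def)
    have ane: "\<alpha> \<noteq> []" using al by auto
    have jne: "js \<noteq> []" using al ane by auto
    show "grp (case a of (\<alpha>, js) \<Rightarrow> expand \<alpha> js) = a"
      using al ae by (simp add: expand_grp)
    show "(case a of (\<alpha>, js) \<Rightarrow> expand \<alpha> js) \<in> Aset (Suc q)"
      using al ae by (auto simp: Aset_def expand_length expand_set expand_sorted)
    define ks where "ks = expand \<alpha> js"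
    have lks: "length ks = Suc q" unfolding ks_def using al by (simp add: expand_length)
    then have kne: "ks \<noteq> []" by auto
    have lastk: "last ks = last js" unfolding ks_def using al ane by (simp add: expand_last)
    have "mzv_term (replicate q 1 @ [n + 2]) ks = mzv_term (replicate q 1 @ [1 + (n + 1)]) (butlast ks @ [last ks])"
      using kne by simp
    also have "\<dots> = mzv_term (replicate q 1 @ [1]) (butlast ks @ [last ks]) * (1 / real (last ks)) ^ (n + 1)"
      using lks by (intro mzv_term_last) simp
    also have "mzv_term (replicate q 1 @ [1]) (butlast ks @ [last ks]) = mzv_term (replicate (sum_list \<alpha>) 1) ks"
      using kne al by (simp add: replicate_append_same)
    also have "\<dots> = mzv_term \<alpha> js" unfolding ks_def by (rule expand_mzv) (use al in simp)
    finally have h1: "mzv_term (replicate q 1 @ [n + 2]) ks = mzv_term \<alpha> js * (1 / real (last js)) ^ (n + 1)"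
      unfolding lastk .
    have "mzv_term (butlast \<alpha> @ [last \<alpha> + n + 1]) js
        = mzv_term (butlast \<alpha> @ [last \<alpha> + (n + 1)]) (butlast js @ [last js])"
      using jne by (simp add: add.assoc)
    also have "\<dots> = mzv_term (butlast \<alpha> @ [last \<alpha>]) (butlast js @ [last js]) * (1 / real (last js)) ^ (n + 1)"
      using al by (intro mzv_term_last) simp
    also have "\<dots> = mzv_term \<alpha> js * (1 / real (last js)) ^ (n + 1)"
      using ane jne by simp
    finally show "mzv_term (replicate q 1 @ [n + 2]) (case a of (\<alpha>, js) \<Rightarrow> expand \<alpha> js)
        = (case a of (\<alpha>, js) \<Rightarrow> mzv_term (butlast \<alpha> @ [last \<alpha> + n + 1]) js)"
      using h1 ae ks_def by simp
  next
    fix b assume b: "b \<in> Aset (Suc q)"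
    have P: "length (fst (grp b)) = length (snd (grp b))" "sum_list (fst (grp b)) = length b"
      "\<forall>a\<in>set (fst (grp b)). 1 \<le> a" "set (snd (grp b)) = set b"
      "expand (fst (grp b)) (snd (grp b)) = b" "sorted_wrt (\<le>) b \<longrightarrow> sorted_wrt (<) (snd (grp b))"
      using grp_props[of b] by auto
    show "(case grp b of (\<alpha>, js) \<Rightarrow> expand \<alpha> js) = b"
      using P by (simp add: case_prod_unfold)
    show "grp b \<in> Sigma (Cset (Suc q)) Bset"
      using P b by (cases "grp b") (auto simp: Cset_def Bset_def Aset_def)
  qed simp
  with zeta_star_has_sum show ?thesis by simp
qed

theorem corollary2p3:
  fixes q n :: nat
  shows "mzv_star (replicate q 1 @ [n + 2])
           = (\<Sum>r=1..q+1. \<Sum>\<alpha>\<in>compositions r (q + 1).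
                mzv (butlast \<alpha> @ [last \<alpha> + n + 1]))
       \<and> (\<Sum>r=1..q+1. \<Sum>\<alpha>\<in>compositions r (q + 1).
                mzv (butlast \<alpha> @ [last \<alpha> + n + 1]))
           = 1 / (fact q * fact n) *
             (\<integral>t\<in>E2. (ln (1 / (1 - snd t))) ^ q * (ln (snd t / fst t)) ^ n
                        / ((1 - fst t) * snd t) \<partial>lborel)"
proof -
  define Z where "Z = (\<Sum>m. cc q n m)"
  have star: "mzv_star (replicate q 1 @ [n + 2]) = Z"
  proof -
    have "{ks. length ks = length (replicate q 1 @ [n + 2]) \<and> sorted_wrt (\<le>) ks \<and> (\<forall>k\<in>set ks. 1 \<le> k)} = Aset (Suc q)"
      by (simp add: Aset_def)
    then show ?thesis unfolding mzv_star_def Z_def using zeta_star_has_sum by (simp add: infsumI)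
  qed
  define g where "g = (\<lambda>(\<alpha>, js). mzv_term (butlast \<alpha> @ [last \<alpha> + n + 1]) js)"
  have gh: "(g has_sum Z) (Sigma (Cset (Suc q)) Bset)" unfolding g_def Z_def by (rule comp_has_sum)
  have fibs: "(\<lambda>js. g (\<alpha>, js)) summable_on Bset \<alpha>" if "\<alpha> \<in> Cset (Suc q)" for \<alpha>
  proof -
    have "(\<lambda>(x, y). g (x, y)) summable_on Sigma (Cset (Suc q)) Bset" using gh by (simp add: has_sum_imp_summable)
    then show ?thesis using that by (rule summable_on_SigmaD1[where f = "\<lambda>x y. g (x, y)"])
  qed
  have H1: "((\<lambda>\<alpha>. infsum (\<lambda>js. g (\<alpha>, js)) (Bset \<alpha>)) has_sum Z) (Cset (Suc q))"
  proof (rule has_sum_SigmaD[where f = g])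
    show "(g has_sum Z) (Sigma (Cset (Suc q)) Bset)" by (rule gh)
    fix \<alpha> assume "\<alpha> \<in> Cset (Suc q)"
    then show "((\<lambda>js. g (\<alpha>, js)) has_sum infsum (\<lambda>js. g (\<alpha>, js)) (Bset \<alpha>)) (Bset \<alpha>)"
      by (intro has_sum_infsum fibs)
  qed
  have H2: "((\<lambda>\<alpha>. infsum (\<lambda>js. g (\<alpha>, js)) (Bset \<alpha>)) has_sum (\<Sum>\<alpha>\<in>Cset (Suc q). infsum (\<lambda>js. g (\<alpha>, js)) (Bset \<alpha>))) (Cset (Suc q))"
    by (rule has_sum_finite[OF finite_Cset])
  have Zsum: "Z = (\<Sum>\<alpha>\<in>Cset (Suc q). infsum (\<lambda>js. g (\<alpha>, js)) (Bset \<alpha>))"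
    by (rule has_sum_unique[OF H1 H2])
  also have "\<dots> = (\<Sum>\<alpha>\<in>Cset (Suc q). mzv (butlast \<alpha> @ [last \<alpha> + n + 1]))"
  proof (rule sum.cong)
    fix \<alpha> assume "\<alpha> \<in> Cset (Suc q)"
    then have "\<alpha> \<noteq> []" by (auto simp: Cset_def)
    then have "length (butlast \<alpha> @ [last \<alpha> + n + 1]) = length \<alpha>" by simp
    then show "infsum (\<lambda>js. g (\<alpha>, js)) (Bset \<alpha>) = mzv (butlast \<alpha> @ [last \<alpha> + n + 1])"
      unfolding mzv_def g_def Bset_def by simp
  qed simp
  also have "\<dots> = (\<Sum>r=1..q+1. \<Sum>\<alpha>\<in>compositions r (q + 1). mzv (butlast \<alpha> @ [last \<alpha> + n + 1]))"
  proof -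
    have CU: "Cset (Suc q) = (\<Union>r\<in>{1..q+1}. compositions r (q + 1))"
    proof (intro equalityI subsetI)
      fix \<alpha> assume a: "\<alpha> \<in> Cset (Suc q)"
      then have "length \<alpha> \<le> Suc q" using len_le_sum unfolding Cset_def by fastforce
      moreover have "\<alpha> \<noteq> []" using a by (auto simp: Cset_def)
      then have "1 \<le> length \<alpha>" by (cases \<alpha>) auto
      ultimately show "\<alpha> \<in> (\<Union>r\<in>{1..q+1}. compositions r (q + 1))"
        using a by (auto simp: Cset_def compositions_def intro!: bexI[where x = "length \<alpha>"])
    qed (auto simp: Cset_def compositions_def)
    have fin: "finite (compositions r m)" for r m
      by (rule finite_subset[OF _ finite_Cset[of m]]) (auto simp: Cset_def compositions_def)
    show ?thesis unfolding CU
      apply (rule sum.UNION_disjoint)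
        apply simp
       apply (simp add: fin)
      apply (auto simp: compositions_def)
      done
  qed
  finally have comp: "(\<Sum>r=1..q+1. \<Sum>\<alpha>\<in>compositions r (q + 1). mzv (butlast \<alpha> @ [last \<alpha> + n + 1])) = Z" ..
  define F where "F = (\<lambda>t::real\<times>real. (ln (1 / (1 - snd t))) ^ q * (ln (snd t / fst t)) ^ n / ((1 - fst t) * snd t))"
  have nn: "(\<integral>\<^sup>+x. ennreal (indicator E2 x *\<^sub>R F x) \<partial>lborel) = ennreal (fact q * fact n * Z)"
  proof -
    have "(\<lambda>m. fact q * fact n * cc q n m) sums (fact q * fact n * Z)"
      unfolding Z_def using cc_summable by (intro sums_mult summable_sums)
    then have "(\<Sum>m. ennreal (fact q * fact n * cc q n m)) = ennreal (fact q * fact n * Z)"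
      by (intro suminf_ennreal_eq) (auto intro!: mult_nonneg_nonneg cc_nonneg)
    moreover have M: "(\<integral>\<^sup>+x. ennreal (indicator E2 x *\<^sub>R F x) \<partial>lborel)
        = (\<Sum>m. ennreal (fact q * fact n * (hh q (Suc m) / (Suc m) ^ (n + 2))))"
      unfolding F_def by (rule main_nn)
    moreover have "ennreal (fact q * fact n * (hh q (Suc m) / (Suc m) ^ (n + 2))) = ennreal (fact q * fact n * cc q n m)" for m
      by (simp only: cc_def of_nat_power)
    ultimately show ?thesis by simp
  qed
  have E2l: "E2 \<in> sets lborel" using E2_sets by (simp only: lborel_prod)
  have "(\<lambda>x. indicator E2 x *\<^sub>R F x) \<in> borel_measurable (lborel \<Otimes>\<^sub>M lborel)"
    unfolding F_def using E2_sets by measurable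
  then have Fmeas: "(\<lambda>x. indicator E2 x *\<^sub>R F x) \<in> borel_measurable lborel"
    by (simp only: lborel_prod)
  have F0: "0 \<le> indicator E2 x *\<^sub>R F x" for x
  proof (cases "x \<in> E2")
    case True
    obtain t1 t2 where x: "x = (t1, t2)" by (cases x)
    with True have t: "0 < t1" "t1 < t2" "t2 < 1" by (auto simp: E2_def)
    have "0 \<le> ln (1 / (1 - t2))" using t by auto
    moreover have "0 \<le> ln (t2 / t1)" using t by auto
    ultimately show ?thesis using True t x unfolding F_def by (auto intro!: divide_nonneg_nonneg mult_nonneg_nonneg)
  qed simp
  have "0 \<le> Z" unfolding Z_def using cc_summable cc_nonneg by (intro suminf_nonneg) auto
  then have "integrable lborel (\<lambda>x. indicator E2 x *\<^sub>R F x) \<and> integral\<^sup>L lborel (\<lambda>x. indicator E2 x *\<^sub>R F x) = fact q * fact n * Z"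
    using nn Fmeas F0 by (subst nn_integral_eq_integrable[symmetric]) auto
  then have "(\<integral>t\<in>E2. F t \<partial>lborel) = fact q * fact n * Z"
    by (simp add: set_lebesgue_integral_def)
  then have int: "1 / (fact q * fact n) * (\<integral>t\<in>E2. F t \<partial>lborel) = Z" by simp
  show ?thesis using star comp int unfolding F_def by simp
qed


end
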